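(* Let $\mathcal{A}\subseteq\mathbb{R}^3$ and let $\varphi_1,\ldots,\varphi_N\in L^2(\mathcal{A})$ be pairwise non-parallel with correlation matrix $\boldsymbol{\Psi}=\int_{\mathcal{A}}\boldsymbol{\varphi}^{\mathsf{H}}(\mathbf{r})\boldsymbol{\varphi}(\mathbf{r})\,\mathrm{d}\mathbf{r}\in\mathbb{C}^{N\times N}$ positive definite, where $\boldsymbol{\varphi}(\mathbf{r})=[\varphi_1(\mathbf{r}),\ldots,\varphi_N(\mathbf{r})]$. Let $\boldsymbol{\Psi}=\mathbf{U}\boldsymbol{\Lambda}\mathbf{U}^{\mathsf{H}}$ be an eigendecomposition with $\mathbf{U}$ unitary and $\boldsymbol{\Lambda}=\mathrm{diag}(\lambda_1,\ldots,\lambda_N)$, $\lambda_n>0$. For a Hermitian $\mathbf{M}\in\mathbb{C}^{N\times N}$ define the operator $T_{\mathbf{M}}$ on $L^2(\mathcal{A})$ with kernel $\delta(\mathbf{r}-\mathbf{r}')-\boldsymbol{\varphi}(\mathbf{r})\mathbf{M}\boldsymbol{\varphi}^{\mathsf{H}}(\mathbf{r}')$, i.e. $(T_{\mathbf{M}}f)(\mathbf{r})=f(\mathbf{r})-\boldsymbol{\varphi}(\mathbf{r})\mathbf{M}\int_{\mathcal{A}}\boldsymbol{\varphi}^{\mathsf{H}}(\mathbf{r}')f(\mathbf{r}')\,\mathrm{d}\mathbf{r}'$. Let $C_\varphi=T_{-\mathbf{I}_N}$ (kernel $\delta(\mathbf{r}-\mathbf{r}')+\boldsymbol{\varphi}(\mathbf{r})\boldsymbol{\varphi}^{\mathsf{H}}(\mathbf{r}')$)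 and $\overline{B}_\varphi=T_{\overline{\mathbf{B}}_{\boldsymbol\Psi}}$ with $\overline{\mathbf{B}}_{\boldsymbol\Psi}=\mathbf{U}\,\mathrm{diag}(\overline{\lambda}_1,\ldots,\overline{\lambda}_N)\mathbf{U}^{\mathsf{H}}$, $\overline{\lambda}_n=\frac{1+\sqrt{1+\lambda_n}}{\lambda_n\sqrt{1+\lambda_n}}$. Then $\overline{B}_\varphi C_\varphi\overline{B}_\varphi$ is the identity operator, i.e. in kernel form $\iint_{\mathcal{A}^2}\overline{B}_\varphi(\mathbf{r}_1,\mathbf{r})C_\varphi(\mathbf{r},\mathbf{r}')\overline{B}_\varphi(\mathbf{r}',\mathbf{r}_2)\,\mathrm{d}\mathbf{r}'\mathrm{d}\mathbf{r}=\delta(\mathbf{r}_1-\mathbf{r}_2)$.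
   Context: Kernels containing $\delta(\mathbf{r}-\mathbf{r}')$ denote the identity plus a finite-rank integral operator; kernel identities with $\delta$ on the right mean operator identities equal to the identity. *)

theory Defs
  imports "HOL-Analysis.Analysis" "Jordan_Normal_Form.Schur_Decomposition"
begin

type_synonym R3 = "real \<times> real \<times> real"

definition sq_integrable :: "R3 set \<Rightarrow> (R3 \<Rightarrow> complex) \<Rightarrow> bool" where
  "sq_integrable A f \<longleftrightarrow> f \<in> borel_measurable (lebesgue_on A)
      \<and> integrable (lebesgue_on A) (\<lambda>r. (cmod (f r))^2)"

definition parallel_L2 :: "R3 set \<Rightarrow> (R3 \<Rightarrow> complex) \<Rightarrow> (R3 \<Rightarrow> complex) \<Rightarrow> bool" where
  "parallel_L2 A f g \<longleftrightarrow>
     (\<exists>c::complex. AE r in lebesgue_on A. f r = c * g r) \<or>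
     (\<exists>c::complex. AE r in lebesgue_on A. g r = c * f r)"

definition hermitian_mat :: "complex mat \<Rightarrow> bool" where
  "hermitian_mat M \<longleftrightarrow> M \<in> carrier_mat (dim_row M) (dim_row M) \<and> mat_adjoint M = M"

definition unitary_mat :: "nat \<Rightarrow> complex mat \<Rightarrow> bool" where
  "unitary_mat N U \<longleftrightarrow> U \<in> carrier_mat N N \<and>
     U * mat_adjoint U = 1\<^sub>m N \<and> mat_adjoint U * U = 1\<^sub>m N"

definition pos_def_mat :: "nat \<Rightarrow> complex mat \<Rightarrow> bool" where
  "pos_def_mat N M \<longleftrightarrow> M \<in> carrier_mat N N \<and> hermitian_mat M \<and>
     (\<forall>v \<in> carrier_vec N. v \<noteq> 0\<^sub>v N \<longrightarrow> 0 < Re (conjugate v \<bullet> (M *\<^sub>v v)))"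

definition corr_mat :: "nat \<Rightarrow> R3 set \<Rightarrow> (nat \<Rightarrow> R3 \<Rightarrow> complex) \<Rightarrow> complex mat" where
  "corr_mat N A \<phi> = mat N N (\<lambda>(m,n). integral\<^sup>L (lebesgue_on A) (\<lambda>r. cnj (\<phi> m r) * \<phi> n r))"

definition T_op :: "nat \<Rightarrow> R3 set \<Rightarrow> (nat \<Rightarrow> R3 \<Rightarrow> complex) \<Rightarrow> complex mat
      \<Rightarrow> (R3 \<Rightarrow> complex) \<Rightarrow> (R3 \<Rightarrow> complex)" where
  "T_op N A \<phi> M f = (\<lambda>r. f r - (\<Sum>m<N. \<Sum>n<N. \<phi> m r * M $$ (m,n) *
       integral\<^sup>L (lebesgue_on A) (\<lambda>r'. cnj (\<phi> n r') * f r')))"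

definition lambda_bar :: "real \<Rightarrow> real" where
  "lambda_bar l = (1 + sqrt (1 + l)) / (l * sqrt (1 + l))"

end

theory Submission
  imports Defs
begin

lemma prod_int:
  assumes "sq_integrable A f" "sq_integrable A g"
  shows "integrable (lebesgue_on A) (\<lambda>r. cnj (f r) * g r)"
proof -
  from assms have m: "f \<in> borel_measurable (lebesgue_on A)" "g \<in> borel_measurable (lebesgue_on A)"
    and i: "integrable (lebesgue_on A) (\<lambda>r. (cmod (f r))^2)" "integrable (lebesgue_on A) (\<lambda>r. (cmod (g r))^2)"
    unfolding sq_integrable_def by auto
  have "integrable (lebesgue_on A) (\<lambda>r. (cmod (f r))^2 + (cmod (g r))^2)"
    using i by (rule Bochner_Integration.integrable_add)
  then show ?thesis
  proof (rule Bochner_Integration.integrable_bound)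
    show "(\<lambda>r. cnj (f r) * g r) \<in> borel_measurable (lebesgue_on A)"
    proof -
      have "(\<lambda>z. cnj z) \<in> borel_measurable borel"
        by (rule borel_measurable_continuous_onI, rule continuous_on_cnj[OF continuous_on_id])
      then have "(\<lambda>r. cnj (f r)) \<in> borel_measurable (lebesgue_on A)"
        using measurable_compose[OF m(1)] by blast
      then show ?thesis using m(2) by (rule borel_measurable_times)
    qed
    show "AE x in lebesgue_on A. norm (cnj (f x) * g x) \<le> norm ((cmod (f x))\<^sup>2 + (cmod (g x))\<^sup>2)"
    proof (rule AE_I2)
      fix x
      have "cmod (f x) * cmod (g x) \<le> (cmod (f x))\<^sup>2 + (cmod (g x))\<^sup>2"
        by (smt (verit) norm_ge_zero power2_eq_square mult_nonneg_nonneg mult_right_mono mult_left_mono)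
      then show "norm (cnj (f x) * g x) \<le> norm ((cmod (f x))\<^sup>2 + (cmod (g x))\<^sup>2)"
        by (simp add: norm_mult)
    qed
  qed
qed

definition cv :: "R3 set \<Rightarrow> (nat \<Rightarrow> R3 \<Rightarrow> complex) \<Rightarrow> (R3 \<Rightarrow> complex) \<Rightarrow> nat \<Rightarrow> complex" where
  "cv A \<phi> f n = integral\<^sup>L (lebesgue_on A) (\<lambda>r'. cnj (\<phi> n r') * f r')"

lemma T_op_cv: "T_op N A \<phi> M f r = f r - (\<Sum>m<N. \<Sum>n<N. \<phi> m r * M $$ (m,n) * cv A \<phi> f n)"
  unfolding T_op_def cv_def by simp

lemma cv_T:
  assumes L2: "\<And>n. n < N \<Longrightarrow> sq_integrable A (\<phi> n)" and f: "sq_integrable A f" and n: "n < N"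
  shows "cv A \<phi> (T_op N A \<phi> K f) n = cv A \<phi> f n -
     (\<Sum>p<N. \<Sum>q<N. corr_mat N A \<phi> $$ (n,p) * K $$ (p,q) * cv A \<phi> f q)"
proof -
  have ps: "corr_mat N A \<phi> $$ (n,p) = integral\<^sup>L (lebesgue_on A) (\<lambda>r. cnj (\<phi> n r) * \<phi> p r)" if "p < N" for p
    using that n unfolding corr_mat_def by simp
  have e: "(\<lambda>r. cnj (\<phi> n r) * T_op N A \<phi> K f r) = (\<lambda>r. cnj (\<phi> n r) * f r -
      (\<Sum>p<N. \<Sum>q<N. (cnj (\<phi> n r) * \<phi> p r) * (K $$ (p,q) * cv A \<phi> f q)))"
    unfolding T_op_cv by (simp add: right_diff_distrib sum_distrib_left mult.assoc)
  have ii: "integrable (lebesgue_on A) (\<lambda>r. cnj (\<phi> n r) * \<phi> p r)" if "p < N" for p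
    using prod_int L2 n that by blast
  have i2: "integrable (lebesgue_on A) (\<lambda>r. cnj (\<phi> n r) * f r)"
    using prod_int L2 n f by blast
  have i3: "integrable (lebesgue_on A) (\<lambda>r. \<Sum>p<N. \<Sum>q<N. (cnj (\<phi> n r) * \<phi> p r) * (K $$ (p,q) * cv A \<phi> f q))"
    using ii by (intro Bochner_Integration.integrable_sum integrable_mult_left) auto
  have "cv A \<phi> (T_op N A \<phi> K f) n = cv A \<phi> f n - integral\<^sup>L (lebesgue_on A) (\<lambda>r. \<Sum>p<N. \<Sum>q<N. (cnj (\<phi> n r) * \<phi> p r) * (K $$ (p,q) * cv A \<phi> f q))"
    unfolding cv_def[of _ _ "T_op N A \<phi> K f"] e
    using Bochner_Integration.integral_diff[OF i2 i3] by (simp add: cv_def)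
  also have "integral\<^sup>L (lebesgue_on A) (\<lambda>r. \<Sum>p<N. \<Sum>q<N. (cnj (\<phi> n r) * \<phi> p r) * (K $$ (p,q) * cv A \<phi> f q))
     = (\<Sum>p<N. \<Sum>q<N. integral\<^sup>L (lebesgue_on A) (\<lambda>r. (cnj (\<phi> n r) * \<phi> p r) * (K $$ (p,q) * cv A \<phi> f q)))"
  proof -
    have iq: "integrable (lebesgue_on A) (\<lambda>r. (cnj (\<phi> n r) * \<phi> p r) * (K $$ (p,q) * cv A \<phi> f q))" if "p < N" for p q
      using ii[OF that] by (rule integrable_mult_left)
    have ip: "integrable (lebesgue_on A) (\<lambda>r. \<Sum>q<N. (cnj (\<phi> n r) * \<phi> p r) * (K $$ (p,q) * cv A \<phi> f q))" if "p < N" for p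
      using iq[OF that] by (rule Bochner_Integration.integrable_sum)
    show ?thesis
      apply (subst Bochner_Integration.integral_sum)
       apply (rule ip, simp)
      apply (rule sum.cong[OF refl])
      apply (simp only: atLeast0LessThan[symmetric])?
      apply (subst Bochner_Integration.integral_sum)
       apply (rule iq, simp)
      apply (rule refl)
      done
  qed
  also have "\<dots> = (\<Sum>p<N. \<Sum>q<N. corr_mat N A \<phi> $$ (n,p) * K $$ (p,q) * cv A \<phi> f q)"
    by (intro sum.cong refl, simp only: integral_mult_left_zero, simp add: ps mult.assoc)
  finally show ?thesis .
qed

lemma entry3:
  fixes M K P :: "complex mat"
  assumes "M \<in> carrier_mat N N" "K \<in> carrier_mat N N" "P \<in> carrier_mat N N" "m < N" "q < N"
  shows "(K + M - M * P * K) $$ (m,q) = K $$ (m,q) + M $$ (m,q) - (\<Sum>p<N. \<Sum>n<N. M $$ (m,n) * P $$ (n,p) * K $$ (p,q))"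
  proof -
  have d: "dim_row M = N" "dim_col M = N" "dim_row K = N" "dim_col K = N" "dim_row P = N" "dim_col P = N"
    using assms by auto
  have "(M * P * K) $$ (m,q) = (\<Sum>p<N. (M * P) $$ (m,p) * K $$ (p,q))"
    using assms by (simp add: scalar_prod_def atLeast0LessThan d del: assoc_mult_mat)
  also have "\<dots> = (\<Sum>p<N. \<Sum>n<N. M $$ (m,n) * P $$ (n,p) * K $$ (p,q))"
    using assms by (intro sum.cong refl) (simp add: scalar_prod_def atLeast0LessThan d sum_distrib_right)
  finally show ?thesis using assms by (simp add: d)
qed

lemma comp:
  assumes L2: "\<And>n. n < N \<Longrightarrow> sq_integrable A (\<phi> n)" and f: "sq_integrable A f"
    and M: "M \<in> carrier_mat N N" and K: "K \<in> carrier_mat N N"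
  shows "T_op N A \<phi> M (T_op N A \<phi> K f) r = T_op N A \<phi> (K + M - M * corr_mat N A \<phi> * K) f r"
proof -
  define P where "P = corr_mat N A \<phi>"
  define c where "c = cv A \<phi> f"
  have P: "P \<in> carrier_mat N N" unfolding P_def corr_mat_def by simp
  have "T_op N A \<phi> M (T_op N A \<phi> K f) r = f r - (\<Sum>m<N. \<Sum>n<N. \<phi> m r * K $$ (m,n) * c n)
     - (\<Sum>m<N. \<Sum>n<N. \<phi> m r * M $$ (m,n) * (c n - (\<Sum>p<N. \<Sum>q<N. P $$ (n,p) * K $$ (p,q) * c q)))"
  proof -
    have g: "T_op N A \<phi> K f r = f r - (\<Sum>m<N. \<Sum>n<N. \<phi> m r * K $$ (m,n) * c n)"
      unfolding c_def by (rule T_op_cv)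
    have cg: "cv A \<phi> (T_op N A \<phi> K f) n = c n - (\<Sum>p<N. \<Sum>q<N. P $$ (n,p) * K $$ (p,q) * c q)" if "n < N" for n
      unfolding c_def P_def by (rule cv_T[OF L2 f that])
    show ?thesis
      unfolding T_op_cv[of N A \<phi> M _ r] g
      by (intro arg_cong2[where f="(-)"] refl sum.cong) (simp_all add: cg)
  qed
  also have "\<dots> = f r - (\<Sum>m<N. \<Sum>q<N. \<phi> m r * (K $$ (m,q) + M $$ (m,q) - (\<Sum>p<N. \<Sum>n<N. M $$ (m,n) * P $$ (n,p) * K $$ (p,q))) * c q)"
  proof -
    have sw: "(\<Sum>m<N. \<Sum>n<N. \<Sum>p<N. \<Sum>q<N. \<phi> m r * M $$ (m,n) * (P $$ (n,p) * K $$ (p,q) * c q))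
      = (\<Sum>m<N. \<Sum>q<N. \<Sum>p<N. \<Sum>n<N. \<phi> m r * (M $$ (m,n) * P $$ (n,p) * K $$ (p,q)) * c q)"
    proof (rule sum.cong[OF refl])
      fix m
      have "(\<Sum>n<N. \<Sum>p<N. \<Sum>q<N. \<phi> m r * M $$ (m,n) * (P $$ (n,p) * K $$ (p,q) * c q))
        = (\<Sum>p<N. \<Sum>n<N. \<Sum>q<N. \<phi> m r * M $$ (m,n) * (P $$ (n,p) * K $$ (p,q) * c q))"
        by (rule sum.swap)
      also have "\<dots> = (\<Sum>p<N. \<Sum>q<N. \<Sum>n<N. \<phi> m r * M $$ (m,n) * (P $$ (n,p) * K $$ (p,q) * c q))"
        by (rule sum.cong[OF refl], rule sum.swap)
      also have "\<dots> = (\<Sum>q<N. \<Sum>p<N. \<Sum>n<N. \<phi> m r * M $$ (m,n) * (P $$ (n,p) * K $$ (p,q) * c q))"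
        by (rule sum.swap)
      finally show "(\<Sum>n<N. \<Sum>p<N. \<Sum>q<N. \<phi> m r * M $$ (m,n) * (P $$ (n,p) * K $$ (p,q) * c q))
        = (\<Sum>q<N. \<Sum>p<N. \<Sum>n<N. \<phi> m r * (M $$ (m,n) * P $$ (n,p) * K $$ (p,q)) * c q)"
        by (simp add: mult_ac)
    qed
    have l: "(\<Sum>m<N. \<Sum>n<N. \<phi> m r * M $$ (m,n) * (c n - (\<Sum>p<N. \<Sum>q<N. P $$ (n,p) * K $$ (p,q) * c q)))
       = (\<Sum>m<N. \<Sum>n<N. \<phi> m r * M $$ (m,n) * c n) - (\<Sum>m<N. \<Sum>n<N. \<Sum>p<N. \<Sum>q<N. \<phi> m r * M $$ (m,n) * (P $$ (n,p) * K $$ (p,q) * c q))"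
      by (simp only: right_diff_distrib sum_subtractf sum_distrib_left)
    have rr: "(\<Sum>m<N. \<Sum>q<N. \<phi> m r * (K $$ (m,q) + M $$ (m,q) - (\<Sum>p<N. \<Sum>n<N. M $$ (m,n) * P $$ (n,p) * K $$ (p,q))) * c q)
      = (\<Sum>m<N. \<Sum>q<N. \<phi> m r * K $$ (m,q) * c q) + (\<Sum>m<N. \<Sum>q<N. \<phi> m r * M $$ (m,q) * c q)
        - (\<Sum>m<N. \<Sum>q<N. \<Sum>p<N. \<Sum>n<N. \<phi> m r * (M $$ (m,n) * P $$ (n,p) * K $$ (p,q)) * c q)"
      by (simp only: right_diff_distrib left_diff_distrib distrib_left distrib_right sum_subtractf sum.distrib sum_distrib_left sum_distrib_right)
    show ?thesis unfolding l rr sw by (simp add: algebra_simps)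
  qed
  also have "\<dots> = T_op N A \<phi> (K + M - M * P * K) f r"
    unfolding T_op_cv c_def
    unfolding T_op_cv c_def
    by (intro arg_cong2[where f="(-)"] refl sum.cong) (simp_all add: entry3[OF M K P] mult.assoc)
  finally show ?thesis unfolding P_def .
qed

lemma lb_identity:
  fixes l :: real assumes l: "l > 0"
  shows "(lambda_bar l + -1 - (-1) * l * lambda_bar l) + lambda_bar l
     - lambda_bar l * l * (lambda_bar l + -1 - (-1) * l * lambda_bar l) = 0"
proof -
  define s where "s = sqrt (1 + l)"
  have s2: "s^2 = 1 + l" unfolding s_def using l by simp
  have s1: "s > 1" unfolding s_def using l by simp
  have lb: "lambda_bar l = 1 / ((s - 1) * s)"
  proof -
    have e: "l = (s - 1) * (s + 1)" using s2 by (simp add: algebra_simps power2_eq_square)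
    have "lambda_bar l = (1 + s) / (((s - 1) * (s + 1)) * s)"
      unfolding lambda_bar_def s_def[symmetric] using e by simp
    then have h: "lambda_bar l * ((s - 1) * (s + 1) * s) = 1 + s" using s1 by (simp add: divide_simps)
    have "(lambda_bar l * ((s - 1) * s) - 1) * (s + 1) = lambda_bar l * ((s - 1) * (s + 1) * s) - (1 + s)"
      by (simp add: algebra_simps)
    then have "(lambda_bar l * ((s - 1) * s) - 1) * (s + 1) = 0" using h by simp
    then have "lambda_bar l * ((s - 1) * s) = 1" using s1 by simp
    then show ?thesis using s1 by (simp add: divide_simps)
  qed
  have ll: "l = s^2 - 1" using s2 by simp
  have sne: "s - 1 \<noteq> 0" "s \<noteq> 0" using s1 by auto
  have "lambda_bar l + -1 - (-1) * l * lambda_bar l = lambda_bar l * (1 + l) - 1"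
    by (simp add: algebra_simps)
  also have "\<dots> = s^2 / ((s - 1) * s) - 1" unfolding lb s2[symmetric] by simp
  also have "\<dots> = s / (s - 1) - 1" using sne by (simp add: power2_eq_square)
  also have "\<dots> = 1 / (s - 1)" using sne by (simp add: field_simps)
  finally have k: "lambda_bar l + -1 - (-1) * l * lambda_bar l = 1 / (s - 1)" .
  have e2: "l = (s - 1) * (s + 1)" using s2 by (simp add: algebra_simps power2_eq_square)
  have "lambda_bar l * l * (1 / (s - 1)) = (1 / ((s - 1) * s)) * ((s - 1) * (s + 1)) * (1 / (s - 1))"
    unfolding lb using e2 by simp
  also have "\<dots> = (s + 1) / (s * (s - 1))" using sne by (simp add: divide_simps)
  finally have bl: "lambda_bar l * l * (1 / (s - 1)) = (s + 1) / (s * (s - 1))" .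
  have "1 / (s - 1) + 1 / ((s - 1) * s) - (s + 1) / (s * (s - 1)) = 0"
    using sne by (simp add: divide_simps)
  then show ?thesis unfolding k bl unfolding lb .
qed

definition Pd :: "nat \<Rightarrow> complex mat \<Rightarrow> (nat \<Rightarrow> complex) \<Rightarrow> complex mat" where
  "Pd N U d = U * mat_diag N d * mat_adjoint U"

context
  fixes N :: nat and U :: "complex mat"
  assumes U: "unitary_mat N U"
begin

lemma U_car: "U \<in> carrier_mat N N" and Uh_car: "mat_adjoint U \<in> carrier_mat N N"
  and UUh: "U * mat_adjoint U = 1\<^sub>m N" and UhU: "mat_adjoint U * U = 1\<^sub>m N"
  using U unfolding unitary_mat_def mat_adjoint_def by (auto simp: mat_of_rows_def)

lemma Pd_car: "Pd N U d \<in> carrier_mat N N"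
  unfolding Pd_def using U_car Uh_car by auto

lemma Pd_dims[simp]: "dim_row (Pd N U d) = N" "dim_col (Pd N U d) = N"
  using Pd_car by auto

lemma Pd_entry: "i < N \<Longrightarrow> j < N \<Longrightarrow>
   Pd N U d $$ (i,j) = (\<Sum>k<N. U $$ (i,k) * d k * mat_adjoint U $$ (k,j))"
  unfolding Pd_def using U_car Uh_car
  by (simp add: mat_diag_mult_right[of U N N] scalar_prod_def atLeast0LessThan del: assoc_mult_mat)

lemma Pd_add: "Pd N U d + Pd N U e = Pd N U (\<lambda>i. d i + e i)"
  by (rule eq_matI) (auto simp: Pd_entry algebra_simps sum.distrib)

lemma Pd_minus: "Pd N U d - Pd N U e = Pd N U (\<lambda>i. d i - e i)"
  by (rule eq_matI) (auto simp: Pd_entry algebra_simps sum_subtractf)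

lemma Pd_cong: "(\<And>i. i < N \<Longrightarrow> d i = e i) \<Longrightarrow> Pd N U d = Pd N U e"
  by (rule eq_matI) (auto simp: Pd_entry)

lemma Pd_zero: "(\<And>i. i < N \<Longrightarrow> d i = 0) \<Longrightarrow> Pd N U d = 0\<^sub>m N N"
  by (rule eq_matI) (auto simp: Pd_entry)

lemma Pd_one: "1\<^sub>m N = Pd N U (\<lambda>i. 1)"
  unfolding Pd_def using U_car Uh_car UUh by simp

lemma Pd_uminus_one: "- 1\<^sub>m N = Pd N U (\<lambda>i. -1)"
proof (rule eq_matI)
  fix i j assume "i < dim_row (Pd N U (\<lambda>i. -1))" "j < dim_col (Pd N U (\<lambda>i. -1))"
  then have ij: "i < N" "j < N" by auto
  have "(1\<^sub>m N) $$ (i,j) = (\<Sum>k<N. U $$ (i,k) * 1 * mat_adjoint U $$ (k,j))"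
    by (subst Pd_one, rule Pd_entry[OF ij])
  then show "(- 1\<^sub>m N) $$ (i,j) = Pd N U (\<lambda>i. -1) $$ (i,j)"
    using ij by (simp add: Pd_entry sum_negf)
qed auto

lemma Pd_mult: "Pd N U d * Pd N U e = Pd N U (\<lambda>i. d i * e i)"
proof -
  define D1 where "D1 = mat_diag N d"
  define D2 where "D2 = mat_diag N e"
  have D: "D1 \<in> carrier_mat N N" "D2 \<in> carrier_mat N N" unfolding D1_def D2_def by auto
  note C = U_car Uh_car D
  have X: "U * D1 \<in> carrier_mat N N" "U * D2 \<in> carrier_mat N N" using C by auto
  have "Pd N U d * Pd N U e = (U * D1) * (mat_adjoint U * ((U * D2) * mat_adjoint U))"
    unfolding Pd_def D1_def[symmetric] D2_def[symmetric]
    by (rule assoc_mult_mat[OF X(1) Uh_car]) (use X(2) Uh_car in \<open>rule mult_carrier_mat\<close>)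
  also have "mat_adjoint U * ((U * D2) * mat_adjoint U) = (mat_adjoint U * (U * D2)) * mat_adjoint U"
    by (rule assoc_mult_mat[symmetric, OF Uh_car X(2) Uh_car])
  also have "mat_adjoint U * (U * D2) = (mat_adjoint U * U) * D2"
    by (rule assoc_mult_mat[symmetric, OF Uh_car U_car D(2)])
  also have "(mat_adjoint U * U) * D2 = D2" unfolding UhU using D by simp
  also have "(U * D1) * (D2 * mat_adjoint U) = ((U * D1) * D2) * mat_adjoint U"
    by (rule assoc_mult_mat[symmetric, OF X(1) D(2) Uh_car])
  also have "(U * D1) * D2 = U * (D1 * D2)"
    by (rule assoc_mult_mat[OF U_car D])
  finally show ?thesis unfolding Pd_def D1_def D2_def mat_diag_diag .
qed

end

lemma T_op_zero: "T_op N A \<phi> (0\<^sub>m N N) f r = f r"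
  unfolding T_op_def by simp

theorem lemma6:
  fixes N :: nat and A :: "R3 set" and \<phi> :: "nat \<Rightarrow> R3 \<Rightarrow> complex"
    and U :: "complex mat" and lam :: "nat \<Rightarrow> real"
  assumes A_meas: "A \<in> sets lebesgue"
    and L2: "\<And>n. n < N \<Longrightarrow> sq_integrable A (\<phi> n)"
    and nonpar: "\<And>i j. i < N \<Longrightarrow> j < N \<Longrightarrow> i \<noteq> j \<Longrightarrow> \<not> parallel_L2 A (\<phi> i) (\<phi> j)"
    and posdef: "pos_def_mat N (corr_mat N A \<phi>)"
    and U_unitary: "unitary_mat N U"
    and lam_pos: "\<And>n. n < N \<Longrightarrow> lam n > 0"
    and eig: "corr_mat N A \<phi> = U * mat_diag N (\<lambda>n. complex_of_real (lam n)) * mat_adjoint U"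
  shows "\<forall>f. sq_integrable A f \<longrightarrow>
    (\<forall>r\<in>A.
      (let Bbar = U * mat_diag N (\<lambda>n. complex_of_real (lambda_bar (lam n))) * mat_adjoint U
       in T_op N A \<phi> Bbar (T_op N A \<phi> (- 1\<^sub>m N) (T_op N A \<phi> Bbar f)) r) = f r)"
proof (intro allI impI ballI)
  fix f r assume f: "sq_integrable A f" and r: "r \<in> A"
  define b where "b = (\<lambda>n. complex_of_real (lambda_bar (lam n)))"
  define l where "l = (\<lambda>n. complex_of_real (lam n))"
  define B where "B = Pd N U b"
  have Psi: "corr_mat N A \<phi> = Pd N U l" unfolding eig Pd_def l_def ..
  have Bc: "B \<in> carrier_mat N N" unfolding B_def by (rule Pd_car[OF U_unitary])
  have Ic: "- 1\<^sub>m N \<in> carrier_mat N (N::nat)" by simp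
  define K1 where "K1 = B + - 1\<^sub>m N - (- 1\<^sub>m N) * corr_mat N A \<phi> * B"
  have K1: "K1 = Pd N U (\<lambda>i. b i + -1 - (-1) * l i * b i)"
    unfolding K1_def B_def Psi Pd_uminus_one[OF U_unitary]
    by (simp only: Pd_mult[OF U_unitary] Pd_add[OF U_unitary] Pd_minus[OF U_unitary])
  have K1c: "K1 \<in> carrier_mat N N" unfolding K1 by (rule Pd_car[OF U_unitary])
  have s1: "T_op N A \<phi> (- 1\<^sub>m N) (T_op N A \<phi> B f) = T_op N A \<phi> K1 f"
    unfolding K1_def by (rule ext, rule comp[OF L2 f Ic Bc])
  have F: "K1 + B - B * corr_mat N A \<phi> * K1 = 0\<^sub>m N N"
  proof -
    have "K1 + B - B * corr_mat N A \<phi> * K1 = Pd N U (\<lambda>i. (b i + -1 - (-1) * l i * b i) + b i - b i * l i * (b i + -1 - (-1) * l i * b i))"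
      unfolding K1 B_def Psi
      by (simp only: Pd_mult[OF U_unitary] Pd_add[OF U_unitary] Pd_minus[OF U_unitary])
    also have "\<dots> = 0\<^sub>m N N"
    proof (rule Pd_zero[OF U_unitary])
      fix i assume i: "i < N"
      have "complex_of_real ((lambda_bar (lam i) + -1 - (-1) * lam i * lambda_bar (lam i)) + lambda_bar (lam i)
        - lambda_bar (lam i) * lam i * (lambda_bar (lam i) + -1 - (-1) * lam i * lambda_bar (lam i))) = 0"
        using lb_identity[OF lam_pos[OF i]] by simp
      then show "(b i + -1 - (-1) * l i * b i) + b i - b i * l i * (b i + -1 - (-1) * l i * b i) = 0"
        unfolding b_def l_def by simp
    qed
    finally show ?thesis .
  qed
  have "T_op N A \<phi> B (T_op N A \<phi> (- 1\<^sub>m N) (T_op N A \<phi> B f)) r = T_op N A \<phi> B (T_op N A \<phi> K1 f) r"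
    by (simp only: s1)
  also have "\<dots> = T_op N A \<phi> (K1 + B - B * corr_mat N A \<phi> * K1) f r"
    by (rule comp[OF L2 f Bc K1c])
  also have "\<dots> = f r" unfolding F by (rule T_op_zero)
  finally have "T_op N A \<phi> B (T_op N A \<phi> (- 1\<^sub>m N) (T_op N A \<phi> B f)) r = f r" .
  then show "(let Bbar = U * mat_diag N (\<lambda>n. complex_of_real (lambda_bar (lam n))) * mat_adjoint U
       in T_op N A \<phi> Bbar (T_op N A \<phi> (- 1\<^sub>m N) (T_op N A \<phi> Bbar f)) r) = f r"
    unfolding B_def Pd_def b_def Let_def .
qed

end
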